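(* For the Curie–Weiss model, for every fixed $0\le\beta<1$ and every integer $n\ge2$ there is a constant $C=C(n,\beta)>0$ such that for all $N\ge 2n$ and all pairwise distinct indices $i_1,j_1,\dots,i_n,j_n\in\{1,\dots,N\}$, $$\bigl|\langle\sigma_{i_1}\sigma_{j_1},\sigma_{i_2}\sigma_{j_2},\dots,\sigma_{i_n}\sigma_{j_n}\rangle_c\bigr|\le\frac{C}{N}.$$
   Context: Curie–Weiss model: for $\sigma\in\{-1,1\}^N$, $\mathcal H_N(\sigma)=-\frac1N\sum_{1\le i<j\le N}\sigma_i\sigma_j$, $Z_N(\beta)=\sum_\sigma e^{-\beta\mathcal H_N(\sigma)}$, and $\langle A\rangle=Z_N(\beta)^{-1}\sum_\sigma A(\sigma)e^{-\beta\mathcal H_N(\sigma)}$. The pairwise $n$-point connected correlation is the joint cumulant of $X_k=\sigma_{i_k}\sigma_{j_k}$, $k=1,\dots,n$, under $\langle\cdot\rangle$: $$\langle X_1,\dots,X_n\rangle_c=\sum_{\pi}(-1)^{|\pi|-1}(|\pi|-1)!\prod_{B\in\pi}\Bigl\langle\prod_{k\in B}X_k\Bigr\rangle,$$ the sum running over all set partitions $\pi$ of $\{1,\dots,n\}$ ($|\pi|$ = number of blocks); equivalently $\langle X_1,\dots,X_n\rangle_c=\langle X_1\cdots X_n\rangle$ minus the sum over all nontrivial partitions of products of lower-order connected correlations of the blocks. *)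

theory Defs
  imports "HOL-Analysis.Analysis" "HOL-Library.Disjoint_Sets"
begin

text \<open>Spin configurations on sites 1..N, represented as functions nat => real
  that take values in {-1,1} on {1..N} and are 1 outside (canonical representative).\<close>
definition configs :: "nat \<Rightarrow> (nat \<Rightarrow> real) set" where
  "configs N = {\<sigma>. (\<forall>i\<in>{1..N}. \<sigma> i = 1 \<or> \<sigma> i = -1) \<and> (\<forall>i. i \<notin> {1..N} \<longrightarrow> \<sigma> i = 1)}"

definition cw_H :: "nat \<Rightarrow> (nat \<Rightarrow> real) \<Rightarrow> real" where
  "cw_H N \<sigma> = - (1 / real N) * (\<Sum>(i,j)\<in>{(i,j). 1 \<le> i \<and> i < j \<and> j \<le> N}. \<sigma> i * \<sigma> j)"

definition cw_Z :: "nat \<Rightarrow> real \<Rightarrow> real" where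
  "cw_Z N \<beta> = (\<Sum>\<sigma>\<in>configs N. exp (- \<beta> * cw_H N \<sigma>))"

definition cw_avg :: "nat \<Rightarrow> real \<Rightarrow> ((nat \<Rightarrow> real) \<Rightarrow> real) \<Rightarrow> real" where
  "cw_avg N \<beta> A = (\<Sum>\<sigma>\<in>configs N. A \<sigma> * exp (- \<beta> * cw_H N \<sigma>)) / cw_Z N \<beta>"

text \<open>Joint cumulant of the observables X 0, ..., X (n-1) under the Gibbs measure,
  via the partition (Moebius) formula over all set partitions of {0..<n}.\<close>
definition cw_cumulant :: "nat \<Rightarrow> real \<Rightarrow> nat \<Rightarrow> (nat \<Rightarrow> (nat \<Rightarrow> real) \<Rightarrow> real) \<Rightarrow> real" where
  "cw_cumulant N \<beta> n X =
     (\<Sum>\<pi>\<in>{\<pi>. partition_on {..<n} \<pi>}.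
        (-1) ^ (card \<pi> - 1) * fact (card \<pi> - 1) *
        (\<Prod>B\<in>\<pi>. cw_avg N \<beta> (\<lambda>\<sigma>. \<Prod>k\<in>B. X k \<sigma>)))"

end

theory Submission
  imports Defs
begin


lemma tanh_lip_aux:
  fixes x y :: real assumes "y \<le> x"
  shows "tanh x - tanh y \<le> x - y"
proof -
  have "(\<lambda>t. t - tanh t) y \<le> (\<lambda>t. t - tanh t) x"
  proof (rule DERIV_nonneg_imp_nondecreasing[OF assms])
    fix t :: real
    have "cosh t \<noteq> 0" using cosh_real_pos[of t] by simp
    hence "DERIV (\<lambda>t. t - tanh t) t :> 1 - (1 - tanh t ^ 2)"
      by (intro derivative_eq_intros) auto
    thus "\<exists>y. DERIV (\<lambda>t. t - tanh t) t :> y \<and> y \<ge> 0" by auto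
  qed
  thus ?thesis by simp
qed

lemma tanh_lip: fixes x y :: real shows "\<bar>tanh x - tanh y\<bar> \<le> \<bar>x - y\<bar>"
proof (cases "y \<le> x")
  case True
  have "tanh y \<le> tanh x" using True by simp
  thus ?thesis using tanh_lip_aux[OF True] True by simp
next
  case False
  hence F: "x \<le> y" by simp
  have "tanh x \<le> tanh y" using F by simp
  thus ?thesis using tanh_lip_aux[OF F] F by simp
qed

lemma tanh_abs_le: fixes x :: real shows "\<bar>tanh x\<bar> \<le> \<bar>x\<bar>"
  using tanh_lip[of x 0] by simp

lemma x_tanh_le: fixes x c :: real assumes "c \<ge> 0" shows "x * tanh (c * x) \<le> c * x^2"
proof -
  have "x * tanh (c*x) \<le> \<bar>x\<bar> * \<bar>tanh (c*x)\<bar>" by (simp add: abs_mult[symmetric])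
  also have "\<dots> \<le> \<bar>x\<bar> * \<bar>c * x\<bar>" by (intro mult_left_mono tanh_abs_le) auto
  also have "\<dots> = c * x^2" using assms by (simp add: abs_mult power2_eq_square)
  finally show ?thesis .
qed



lemma configs_finite: "finite (configs N)"
proof -
  have "configs N = {f. \<forall>x. (x \<in> {1..N} \<longrightarrow> f x \<in> {1,-1}) \<and> (x \<notin> {1..N} \<longrightarrow> f x = 1)}"
    unfolding configs_def by auto
  thus ?thesis using finite_set_of_finite_funs[of "{1..N}" "{1::real,-1}" 1] by simp
qed

lemma configs_ne: "(\<lambda>_. 1) \<in> configs N"
  unfolding configs_def by auto

lemma configs_val: "\<sigma> \<in> configs N \<Longrightarrow> i \<in> {1..N} \<Longrightarrow> \<sigma> i = 1 \<or> \<sigma> i = -1"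
  unfolding configs_def by auto

lemma configs_sq: "\<sigma> \<in> configs N \<Longrightarrow> i \<in> {1..N} \<Longrightarrow> \<sigma> i * \<sigma> i = 1"
  using configs_val by fastforce

lemma configs_abs: "\<bar>\<sigma> i\<bar> = 1" if "\<sigma> \<in> configs N"
proof (cases "i \<in> {1..N}")
  case True
  then show ?thesis using configs_val[of \<sigma> N i] that by auto
qed (use that in \<open>auto simp: configs_def\<close>)

lemma pair_sum:
  fixes f :: "nat \<Rightarrow> real"
  shows "(\<Sum>(a,b)\<in>{(a,b). 1 \<le> a \<and> a < b \<and> b \<le> N}. f a * f b)
     = ((\<Sum>a\<in>{1..N}. f a)^2 - (\<Sum>a\<in>{1..N}. f a * f a)) / 2"
proof (induction N)
  case 0
  have e0: "{(a,b). 1 \<le> a \<and> a < b \<and> b \<le> (0::nat)} = {}" by auto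
  show ?case unfolding e0 by simp
next
  case (Suc N)
  have eq: "{(a,b). 1 \<le> a \<and> a < b \<and> b \<le> Suc N} =
     {(a,b). 1 \<le> a \<and> a < b \<and> b \<le> N} \<union> (\<lambda>a. (a, Suc N)) ` {1..N}" by auto
  have fin: "finite {(a,b). 1 \<le> a \<and> a < b \<and> b \<le> N}"
    by (rule finite_subset[of _ "{1..N} \<times> {1..N}"]) auto
  have "(\<Sum>(a,b)\<in>{(a,b). 1 \<le> a \<and> a < b \<and> b \<le> Suc N}. f a * f b)
     = (\<Sum>(a,b)\<in>{(a,b). 1 \<le> a \<and> a < b \<and> b \<le> N}. f a * f b)
       + (\<Sum>(a,b)\<in>(\<lambda>a. (a, Suc N)) ` {1..N}. f a * f b)"
    unfolding eq by (rule sum.union_disjoint) (use fin in auto)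
  also have "(\<Sum>(a,b)\<in>(\<lambda>a. (a, Suc N)) ` {1..N}. f a * f b) = (\<Sum>a\<in>{1..N}. f a * f (Suc N))"
    by (subst sum.reindex) (auto simp: inj_on_def)
  finally show ?case using Suc
    by (simp add: sum_distrib_right[symmetric] power2_eq_square algebra_simps add_divide_distrib)
qed

definition Mag :: "nat \<Rightarrow> (nat \<Rightarrow> real) \<Rightarrow> real" where
  "Mag N \<sigma> = (\<Sum>a\<in>{1..N}. \<sigma> a)"

lemma H_eq: assumes "\<sigma> \<in> configs N"
  shows "cw_H N \<sigma> = - (1 / real N) * (((Mag N \<sigma>)^2 - real N) / 2)"
proof -
  have "(\<Sum>a\<in>{1..N}. \<sigma> a * \<sigma> a) = (\<Sum>a\<in>{1..N}. 1)"
    using configs_sq[OF assms] by (intro sum.cong) auto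
  thus ?thesis unfolding cw_H_def Mag_def pair_sum by simp
qed



definition wt :: "nat \<Rightarrow> real \<Rightarrow> (nat \<Rightarrow> real) \<Rightarrow> real" where
  "wt N \<beta> \<sigma> = exp (- \<beta> * cw_H N \<sigma>)"

lemma Z_pos: "cw_Z N \<beta> > 0"
  unfolding cw_Z_def
  by (rule sum_pos2[OF configs_finite configs_ne]) auto

lemma avg_def2: "cw_avg N \<beta> f = (\<Sum>\<sigma>\<in>configs N. f \<sigma> * wt N \<beta> \<sigma>) / cw_Z N \<beta>"
  unfolding cw_avg_def wt_def ..

lemma avg_add: "cw_avg N \<beta> (\<lambda>\<sigma>. f \<sigma> + g \<sigma>) = cw_avg N \<beta> f + cw_avg N \<beta> g"
  unfolding avg_def2 by (simp add: distrib_right sum.distrib add_divide_distrib)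

lemma avg_cmult: "cw_avg N \<beta> (\<lambda>\<sigma>. c * f \<sigma>) = c * cw_avg N \<beta> f"
  unfolding avg_def2 by (simp add: sum_distrib_left mult.assoc)

lemma avg_sum: "finite I \<Longrightarrow> cw_avg N \<beta> (\<lambda>\<sigma>. \<Sum>i\<in>I. f i \<sigma>) = (\<Sum>i\<in>I. cw_avg N \<beta> (f i))"
  by (induction I rule: finite_induct) (auto simp: avg_add avg_def2)

lemma avg_const: "cw_avg N \<beta> (\<lambda>\<sigma>. c) = c"
  unfolding cw_avg_def cw_Z_def using Z_pos[of N \<beta>] unfolding cw_Z_def
  by (simp add: sum_distrib_left[symmetric])

lemma avg_cong: "(\<And>\<sigma>. \<sigma> \<in> configs N \<Longrightarrow> f \<sigma> = g \<sigma>) \<Longrightarrow> cw_avg N \<beta> f = cw_avg N \<beta> g"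
  unfolding avg_def2 by (simp cong: sum.cong)

lemma avg_mono: "(\<And>\<sigma>. \<sigma> \<in> configs N \<Longrightarrow> f \<sigma> \<le> g \<sigma>) \<Longrightarrow> cw_avg N \<beta> f \<le> cw_avg N \<beta> g"
  unfolding avg_def2 using Z_pos[of N \<beta>]
  by (intro divide_right_mono sum_mono mult_right_mono) (auto simp: wt_def)

lemma avg_abs: "\<bar>cw_avg N \<beta> f\<bar> \<le> cw_avg N \<beta> (\<lambda>\<sigma>. \<bar>f \<sigma>\<bar>)"
proof -
  have "\<bar>cw_avg N \<beta> f\<bar> = \<bar>\<Sum>\<sigma>\<in>configs N. f \<sigma> * wt N \<beta> \<sigma>\<bar> / cw_Z N \<beta>"
    unfolding avg_def2 using Z_pos[of N \<beta>] by simp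
  also have "\<dots> \<le> (\<Sum>\<sigma>\<in>configs N. \<bar>f \<sigma> * wt N \<beta> \<sigma>\<bar>) / cw_Z N \<beta>"
    using Z_pos[of N \<beta>] by (intro divide_right_mono sum_abs) auto
  also have "\<dots> = cw_avg N \<beta> (\<lambda>\<sigma>. \<bar>f \<sigma>\<bar>)"
    unfolding avg_def2 by (simp add: abs_mult wt_def)
  finally show ?thesis .
qed

definition flip :: "nat \<Rightarrow> (nat \<Rightarrow> real) \<Rightarrow> (nat \<Rightarrow> real)" where
  "flip i \<sigma> = \<sigma>(i := - \<sigma> i)"

lemma flip_configs: "i \<in> {1..N} \<Longrightarrow> \<sigma> \<in> configs N \<Longrightarrow> flip i \<sigma> \<in> configs N"
  unfolding configs_def flip_def by auto

lemma flip_flip: "flip i (flip i \<sigma>) = \<sigma>"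
  unfolding flip_def by auto

lemma sum_flip: assumes "i \<in> {1..N}"
  shows "(\<Sum>\<sigma>\<in>configs N. F (flip i \<sigma>)) = (\<Sum>\<sigma>\<in>configs N. (F \<sigma> :: real))"
  by (rule sum.reindex_bij_witness[of _ "flip i" "flip i"])
     (auto simp: flip_flip flip_configs[OF assms])

lemma Mag_flip: assumes "i \<in> {1..N}"
  shows "Mag N (flip i \<sigma>) = Mag N \<sigma> - 2 * \<sigma> i"
proof -
  have "Mag N (flip i \<sigma>) = (\<Sum>a\<in>{1..N}. \<sigma> a - (if a = i then 2 * \<sigma> i else 0))"
    unfolding Mag_def flip_def by (intro sum.cong) auto
  also have "\<dots> = Mag N \<sigma> - 2 * \<sigma> i"
    unfolding Mag_def using assms by (simp add: sum_subtractf)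
  finally show ?thesis .
qed

lemma wt_split: assumes "\<sigma> \<in> configs N" "i \<in> {1..N}"
  shows "wt N \<beta> \<sigma> = exp (\<beta> * ((Mag N \<sigma> - \<sigma> i)^2 + 1 - N) / (2 * N))
          * exp (\<beta> * \<sigma> i * ((Mag N \<sigma> - \<sigma> i) / N))"
proof -
  have s: "\<sigma> i * \<sigma> i = 1" using configs_sq[OF assms] .
  have "Mag N \<sigma> ^ 2 = (Mag N \<sigma> - \<sigma> i)^2 + 2 * \<sigma> i * (Mag N \<sigma> - \<sigma> i) + \<sigma> i * \<sigma> i"
    by (simp add: power2_eq_square algebra_simps)
  hence M: "Mag N \<sigma> ^ 2 = (Mag N \<sigma> - \<sigma> i)^2 + 2 * \<sigma> i * (Mag N \<sigma> - \<sigma> i) + 1"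
    using s by simp
  have "- \<beta> * cw_H N \<sigma> = \<beta> * ((Mag N \<sigma> - \<sigma> i)^2 + 1 - N) / (2 * N)
          + \<beta> * \<sigma> i * ((Mag N \<sigma> - \<sigma> i) / N)"
  proof -
    have N0: "real N \<noteq> 0" using assms(2) by auto
    have gen: "- \<beta> * (- (1 / N) * (((a^2 + 2 * s * a + 1) - N) / 2))
       = \<beta> * (a^2 + 1 - N) / (2 * N) + \<beta> * s * (a / N)" for a s :: real
      using N0 by (simp add: field_simps)
    show ?thesis unfolding H_eq[OF assms(1)] M by (rule gen)
  qed
  thus ?thesis unfolding wt_def by (simp add: exp_add)
qed

lemma flip_identity:
  assumes i: "i \<in> {1..N}" and f: "\<And>\<sigma>. \<sigma> \<in> configs N \<Longrightarrow> f (flip i \<sigma>) = f \<sigma>"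
  shows "cw_avg N \<beta> (\<lambda>\<sigma>. \<sigma> i * f \<sigma>)
       = cw_avg N \<beta> (\<lambda>\<sigma>. tanh (\<beta> * ((Mag N \<sigma> - \<sigma> i) / N)) * f \<sigma>)"
proof -
  define T where "T \<sigma> = tanh (\<beta> * ((Mag N \<sigma> - \<sigma> i) / N))" for \<sigma>
  have fl_i: "flip i \<sigma> i = - \<sigma> i" for \<sigma> unfolding flip_def by simp
  have Mf: "Mag N (flip i \<sigma>) - flip i \<sigma> i = Mag N \<sigma> - \<sigma> i" for \<sigma>
    using Mag_flip[OF i] fl_i by simp
  have Tf: "T (flip i \<sigma>) = T \<sigma>" for \<sigma> unfolding T_def Mf ..
  define A where "A = (\<Sum>\<sigma>\<in>configs N. \<sigma> i * f \<sigma> * wt N \<beta> \<sigma>)"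
  define B where "B = (\<Sum>\<sigma>\<in>configs N. T \<sigma> * f \<sigma> * wt N \<beta> \<sigma>)"
  have A2: "A = (\<Sum>\<sigma>\<in>configs N. - \<sigma> i * f \<sigma> * wt N \<beta> (flip i \<sigma>))"
    unfolding A_def
    by (subst sum_flip[OF i, symmetric]) (intro sum.cong, auto simp: fl_i f)
  have B2: "B = (\<Sum>\<sigma>\<in>configs N. T \<sigma> * f \<sigma> * wt N \<beta> (flip i \<sigma>))"
    unfolding B_def
    by (subst sum_flip[OF i, symmetric]) (intro sum.cong, auto simp: Tf f)
  have pt: "\<sigma> i * (wt N \<beta> \<sigma> - wt N \<beta> (flip i \<sigma>)) = T \<sigma> * (wt N \<beta> \<sigma> + wt N \<beta> (flip i \<sigma>))"
    if s: "\<sigma> \<in> configs N" for \<sigma>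
  proof -
    define R where "R = exp (\<beta> * ((Mag N \<sigma> - \<sigma> i)^2 + 1 - N) / (2 * N))"
    define x where "x = \<beta> * ((Mag N \<sigma> - \<sigma> i) / N)"
    have w1: "wt N \<beta> \<sigma> = R * exp (\<sigma> i * x)"
      unfolding wt_split[OF s i] R_def x_def by (simp add: mult.assoc mult.left_commute)
    have w2: "wt N \<beta> (flip i \<sigma>) = R * exp (- \<sigma> i * x)"
    proof -
      have e: "Mag N (flip i \<sigma>) + \<sigma> i = Mag N \<sigma> - \<sigma> i" using Mag_flip[OF i, of \<sigma>] by simp
      show ?thesis unfolding wt_split[OF flip_configs[OF i s] i] R_def x_def fl_i
        by (simp add: e mult.assoc mult.left_commute)
    qed
    have Tx: "T \<sigma> = tanh x" unfolding T_def x_def ..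
    have pos: "exp x + exp (-x) > 0" by (simp add: add_pos_pos)
    have th: "tanh x * (exp x + exp (-x)) = exp x - exp (-x)"
      unfolding tanh_altdef using pos by simp
    from configs_val[OF s i] show ?thesis
    proof
      assume "\<sigma> i = 1"
      thus ?thesis unfolding w1 w2 Tx using arg_cong[OF th, of "\<lambda>t. R * t"] by (simp add: algebra_simps)
    next
      assume "\<sigma> i = -1"
      thus ?thesis unfolding w1 w2 Tx using arg_cong[OF th, of "\<lambda>t. R * t"] by (simp add: algebra_simps)
    qed
  qed
  have "2 * A = (\<Sum>\<sigma>\<in>configs N. f \<sigma> * (\<sigma> i * (wt N \<beta> \<sigma> - wt N \<beta> (flip i \<sigma>))))"
    by (subst mult_2, subst A_def, subst A2, subst sum.distrib[symmetric])
       (intro sum.cong, auto simp: algebra_simps)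
  also have "\<dots> = (\<Sum>\<sigma>\<in>configs N. f \<sigma> * (T \<sigma> * (wt N \<beta> \<sigma> + wt N \<beta> (flip i \<sigma>))))"
    by (intro sum.cong) (auto simp: pt)
  also have "\<dots> = 2 * B"
    by (subst mult_2, subst B_def, subst B2, subst sum.distrib[symmetric])
       (intro sum.cong, auto simp: algebra_simps)
  finally have "A = B" by simp
  thus ?thesis unfolding avg_def2 A_def B_def T_def by (simp add: mult.assoc)
qed



lemma flip_other: "c \<noteq> i \<Longrightarrow> flip i \<sigma> c = \<sigma> c"
  unfolding flip_def by simp

lemma flip_i: "flip i \<sigma> i = - \<sigma> i"
  unfolding flip_def by simp

lemma M2_bound:
  assumes N: "N > 0" and b0: "0 \<le> \<beta>" and b1: "\<beta> < 1"
  shows "cw_avg N \<beta> (\<lambda>\<sigma>. (Mag N \<sigma>)^2) \<le> 2 * N / (1 - \<beta>)"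
proof -
  define E where "E = cw_avg N \<beta> (\<lambda>\<sigma>. (Mag N \<sigma>)^2)"
  have pw: "(Mag N \<sigma>)^2 = (\<Sum>i\<in>{1..N}. \<sigma> i * (Mag N \<sigma> - \<sigma> i)) + N" if s: "\<sigma> \<in> configs N" for \<sigma>
  proof -
    have "(\<Sum>i\<in>{1..N}. \<sigma> i * (Mag N \<sigma> - \<sigma> i)) = (\<Sum>i\<in>{1..N}. \<sigma> i * Mag N \<sigma> - 1)"
      using configs_sq[OF s] by (intro sum.cong) (auto simp: algebra_simps)
    also have "\<dots> = Mag N \<sigma> * Mag N \<sigma> - N"
      by (simp add: sum_subtractf sum_distrib_right[symmetric] Mag_def)
    finally show ?thesis by (simp add: power2_eq_square)
  qed
  have "E = cw_avg N \<beta> (\<lambda>\<sigma>. (\<Sum>i\<in>{1..N}. \<sigma> i * (Mag N \<sigma> - \<sigma> i)) + N)"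
    unfolding E_def by (rule avg_cong) (rule pw)
  also have "\<dots> = (\<Sum>i\<in>{1..N}. cw_avg N \<beta> (\<lambda>\<sigma>. \<sigma> i * (Mag N \<sigma> - \<sigma> i))) + N"
    by (simp add: avg_add avg_sum avg_const)
  also have "(\<Sum>i\<in>{1..N}. cw_avg N \<beta> (\<lambda>\<sigma>. \<sigma> i * (Mag N \<sigma> - \<sigma> i)))
      = (\<Sum>i\<in>{1..N}. cw_avg N \<beta> (\<lambda>\<sigma>. tanh (\<beta> * ((Mag N \<sigma> - \<sigma> i) / N)) * (Mag N \<sigma> - \<sigma> i)))"
  proof (intro sum.cong refl)
    fix i assume i: "i \<in> {1..N}"
    show "cw_avg N \<beta> (\<lambda>\<sigma>. \<sigma> i * (Mag N \<sigma> - \<sigma> i))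
      = cw_avg N \<beta> (\<lambda>\<sigma>. tanh (\<beta> * ((Mag N \<sigma> - \<sigma> i) / N)) * (Mag N \<sigma> - \<sigma> i))"
      by (rule flip_identity[OF i]) (simp add: Mag_flip[OF i] flip_i)
  qed
  also have "\<dots> \<le> (\<Sum>i\<in>{1..N}. cw_avg N \<beta> (\<lambda>\<sigma>. (\<beta> / N) * (Mag N \<sigma> - \<sigma> i)^2))"
  proof (intro sum_mono avg_mono)
    fix i \<sigma>
    have "(Mag N \<sigma> - \<sigma> i) * tanh ((\<beta> / N) * (Mag N \<sigma> - \<sigma> i)) \<le> (\<beta> / N) * (Mag N \<sigma> - \<sigma> i)^2"
      by (rule x_tanh_le) (use b0 in simp)
    thus "tanh (\<beta> * ((Mag N \<sigma> - \<sigma> i) / N)) * (Mag N \<sigma> - \<sigma> i) \<le> (\<beta> / N) * (Mag N \<sigma> - \<sigma> i)^2"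
      by (simp add: mult.commute)
  qed
  also have "\<dots> = cw_avg N \<beta> (\<lambda>\<sigma>. (\<beta> / N) * (\<Sum>i\<in>{1..N}. (Mag N \<sigma> - \<sigma> i)^2))"
    by (simp only: avg_cmult avg_sum[OF finite_atLeastAtMost] sum_distrib_left)
  also have "\<dots> \<le> cw_avg N \<beta> (\<lambda>\<sigma>. \<beta> * (Mag N \<sigma>)^2 + \<beta>)"
  proof (rule avg_mono)
    fix \<sigma> assume s: "\<sigma> \<in> configs N"
    have "(\<Sum>i\<in>{1..N}. (Mag N \<sigma> - \<sigma> i)^2) = (\<Sum>i\<in>{1..N}. Mag N \<sigma> * Mag N \<sigma> - 2 * Mag N \<sigma> * \<sigma> i + 1)"
      using configs_sq[OF s] by (intro sum.cong) (auto simp: power2_eq_square algebra_simps)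
    also have "\<dots> = N * (Mag N \<sigma>)^2 - 2 * (Mag N \<sigma>)^2 + N"
      by (simp add: sum.distrib sum_subtractf sum_distrib_left[symmetric] Mag_def power2_eq_square)
    also have "\<dots> \<le> N * (Mag N \<sigma>)^2 + N" by simp
    finally have "(\<beta> / N) * (\<Sum>i\<in>{1..N}. (Mag N \<sigma> - \<sigma> i)^2) \<le> (\<beta> / N) * (N * (Mag N \<sigma>)^2 + N)"
      by (intro mult_left_mono) (use b0 in auto)
    also have "\<dots> = \<beta> * (Mag N \<sigma>)^2 + \<beta>" using N by (simp add: field_simps)
    finally show "(\<beta> / N) * (\<Sum>i\<in>{1..N}. (Mag N \<sigma> - \<sigma> i)^2) \<le> \<beta> * (Mag N \<sigma>)^2 + \<beta>" .
  qed
  also have "\<dots> = \<beta> * E + \<beta>" unfolding E_def by (simp add: avg_add avg_cmult avg_const)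
  finally have "E \<le> \<beta> * E + \<beta> + N" by simp
  hence "(1 - \<beta>) * E \<le> N + \<beta>" by (simp add: algebra_simps)
  also have "\<dots> \<le> 2 * N" using N b1 by simp
  finally have "(1 - \<beta>) * E \<le> 2 * N" .
  thus ?thesis unfolding E_def[symmetric] using b1 by (simp add: field_simps mult.commute)
qed



lemma sq_shift: fixes M s :: real assumes "\<bar>s\<bar> \<le> 2" shows "(M - s)^2 \<le> 2 * M^2 + 8"
proof -
  have e: "(M - s)^2 = 2 * M^2 + 2 * s^2 - (M + s)^2" by (simp add: power2_eq_square algebra_simps)
  have "(M - s)^2 \<le> 2 * M^2 + 2 * s^2" unfolding e using zero_le_power2[of "M + s"] by linarith
  moreover have "\<bar>s\<bar>^2 \<le> 2^2" by (rule power_mono) (use assms in auto)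
  hence "s^2 \<le> 4" by simp
  ultimately show ?thesis by simp
qed

lemma pair_bound:
  assumes N: "N > 0" and b0: "0 \<le> \<beta>" and b1: "\<beta> < 1"
    and a: "a \<in> {1..N}" and b: "b \<in> {1..N}" and ab: "a \<noteq> b"
    and ga: "\<And>\<sigma>. \<sigma> \<in> configs N \<Longrightarrow> g (flip a \<sigma>) = g \<sigma>"
    and gb: "\<And>\<sigma>. \<sigma> \<in> configs N \<Longrightarrow> g (flip b \<sigma>) = g \<sigma>"
    and g1: "\<And>\<sigma>. \<sigma> \<in> configs N \<Longrightarrow> \<bar>g \<sigma>\<bar> \<le> 1"
  shows "\<bar>cw_avg N \<beta> (\<lambda>\<sigma>. \<sigma> a * \<sigma> b * g \<sigma>)\<bar> \<le> (4 / (1 - \<beta>) + 9) / N"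
proof -
  define ta where "ta \<sigma> = tanh (\<beta> * ((Mag N \<sigma> - \<sigma> a) / N))" for \<sigma>
  define tab where "tab \<sigma> = tanh (\<beta> * ((Mag N \<sigma> - \<sigma> a - \<sigma> b) / N))" for \<sigma>
  define tb where "tb \<sigma> = tanh (\<beta> * ((Mag N \<sigma> - \<sigma> b) / N))" for \<sigma>
  have Nr: "real N > 0" using N by simp
  have step1: "cw_avg N \<beta> (\<lambda>\<sigma>. \<sigma> a * \<sigma> b * g \<sigma>) = cw_avg N \<beta> (\<lambda>\<sigma>. ta \<sigma> * (\<sigma> b * g \<sigma>))"
    unfolding ta_def
    by (simp only: mult.assoc, rule flip_identity[OF a]) (simp add: ga flip_other[OF ab[symmetric]])
  have step2: "cw_avg N \<beta> (\<lambda>\<sigma>. ta \<sigma> * (\<sigma> b * g \<sigma>))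
      = cw_avg N \<beta> (\<lambda>\<sigma>. (ta \<sigma> - tab \<sigma>) * (\<sigma> b * g \<sigma>)) + cw_avg N \<beta> (\<lambda>\<sigma>. \<sigma> b * (tab \<sigma> * g \<sigma>))"
    by (subst avg_add[symmetric]) (rule avg_cong, simp add: algebra_simps)
  have step3: "cw_avg N \<beta> (\<lambda>\<sigma>. \<sigma> b * (tab \<sigma> * g \<sigma>)) = cw_avg N \<beta> (\<lambda>\<sigma>. tb \<sigma> * (tab \<sigma> * g \<sigma>))"
    unfolding tb_def
  proof (rule flip_identity[OF b])
    fix \<sigma> assume s: "\<sigma> \<in> configs N"
    have "Mag N (flip b \<sigma>) - flip b \<sigma> a - flip b \<sigma> b = Mag N \<sigma> - \<sigma> a - \<sigma> b"
      by (simp add: Mag_flip[OF b] flip_other[OF ab] flip_i)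
    thus "tab (flip b \<sigma>) * g (flip b \<sigma>) = tab \<sigma> * g \<sigma>" unfolding tab_def using gb[OF s] by simp
  qed
  have A1: "\<bar>cw_avg N \<beta> (\<lambda>\<sigma>. (ta \<sigma> - tab \<sigma>) * (\<sigma> b * g \<sigma>))\<bar> \<le> 1 / N"
  proof -
    have "\<bar>cw_avg N \<beta> (\<lambda>\<sigma>. (ta \<sigma> - tab \<sigma>) * (\<sigma> b * g \<sigma>))\<bar>
        \<le> cw_avg N \<beta> (\<lambda>\<sigma>. \<bar>(ta \<sigma> - tab \<sigma>) * (\<sigma> b * g \<sigma>)\<bar>)" by (rule avg_abs)
    also have "\<dots> \<le> cw_avg N \<beta> (\<lambda>\<sigma>. 1 / N)"
    proof (rule avg_mono)
      fix \<sigma> assume s: "\<sigma> \<in> configs N"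
      have "\<bar>ta \<sigma> - tab \<sigma>\<bar> \<le> \<bar>\<beta> * ((Mag N \<sigma> - \<sigma> a) / N) - \<beta> * ((Mag N \<sigma> - \<sigma> a - \<sigma> b) / N)\<bar>"
        unfolding ta_def tab_def by (rule tanh_lip)
      also have "\<dots> = \<beta> * \<bar>\<sigma> b\<bar> / N" using b0 Nr by (simp add: field_simps abs_mult abs_divide)
      also have "\<dots> \<le> 1 / N" using configs_abs[OF s, of b] b1 Nr by (simp add: divide_right_mono)
      finally have t: "\<bar>ta \<sigma> - tab \<sigma>\<bar> \<le> 1 / N" .
      have "\<bar>\<sigma> b * g \<sigma>\<bar> \<le> 1" using configs_abs[OF s, of b] g1[OF s] by (simp add: abs_mult)
      hence "\<bar>ta \<sigma> - tab \<sigma>\<bar> * \<bar>\<sigma> b * g \<sigma>\<bar> \<le> 1 / N * 1"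
        using t by (intro mult_mono) auto
      thus "\<bar>(ta \<sigma> - tab \<sigma>) * (\<sigma> b * g \<sigma>)\<bar> \<le> 1 / N" by (simp add: abs_mult)
    qed
    also have "\<dots> = 1 / N" by (rule avg_const)
    finally show ?thesis .
  qed
  have A2: "\<bar>cw_avg N \<beta> (\<lambda>\<sigma>. tb \<sigma> * (tab \<sigma> * g \<sigma>))\<bar> \<le> (4 / (1 - \<beta>) + 8) / N"
  proof -
    have "\<bar>cw_avg N \<beta> (\<lambda>\<sigma>. tb \<sigma> * (tab \<sigma> * g \<sigma>))\<bar> \<le> cw_avg N \<beta> (\<lambda>\<sigma>. \<bar>tb \<sigma> * (tab \<sigma> * g \<sigma>)\<bar>)"
      by (rule avg_abs)
    also have "\<dots> \<le> cw_avg N \<beta> (\<lambda>\<sigma>. (2 / N^2) * (Mag N \<sigma>)^2 + 8 / N^2)"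
    proof (rule avg_mono)
      fix \<sigma> assume s: "\<sigma> \<in> configs N"
      define x where "x = Mag N \<sigma> - \<sigma> b"
      define y where "y = Mag N \<sigma> - \<sigma> a - \<sigma> b"
      have hx: "\<bar>tb \<sigma>\<bar> \<le> \<bar>x\<bar> / N"
      proof -
        have "\<bar>tb \<sigma>\<bar> \<le> \<bar>\<beta> * (x / N)\<bar>" unfolding tb_def x_def by (rule tanh_abs_le)
        also have "\<dots> = \<beta> * (\<bar>x\<bar> / N)" using b0 by (simp add: abs_mult)
        also have "\<dots> \<le> 1 * (\<bar>x\<bar> / N)" by (rule mult_right_mono) (use b1 in auto)
        finally show ?thesis by simp
      qed
      have hy: "\<bar>tab \<sigma>\<bar> \<le> \<bar>y\<bar> / N"
      proof -
        have "\<bar>tab \<sigma>\<bar> \<le> \<bar>\<beta> * (y / N)\<bar>" unfolding tab_def y_def by (rule tanh_abs_le)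
        also have "\<dots> = \<beta> * (\<bar>y\<bar> / N)" using b0 by (simp add: abs_mult)
        also have "\<dots> \<le> 1 * (\<bar>y\<bar> / N)" by (rule mult_right_mono) (use b1 in auto)
        finally show ?thesis by simp
      qed
      have "\<bar>tab \<sigma>\<bar> * \<bar>g \<sigma>\<bar> \<le> \<bar>tab \<sigma>\<bar> * 1"
        using g1[OF s] by (intro mult_left_mono) auto
      hence "\<bar>tb \<sigma>\<bar> * (\<bar>tab \<sigma>\<bar> * \<bar>g \<sigma>\<bar>) \<le> \<bar>tb \<sigma>\<bar> * (\<bar>tab \<sigma>\<bar> * 1)"
        by (rule mult_left_mono[OF _ abs_ge_zero])
      hence "\<bar>tb \<sigma> * (tab \<sigma> * g \<sigma>)\<bar> \<le> \<bar>tb \<sigma>\<bar> * \<bar>tab \<sigma>\<bar>"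
        by (simp add: abs_mult)
      also have "\<dots> \<le> (\<bar>x\<bar> / N) * (\<bar>y\<bar> / N)" using hx hy by (intro mult_mono) auto
      also have "\<dots> = (\<bar>x\<bar> * \<bar>y\<bar>) / N^2" by (simp add: power2_eq_square)
      also have "\<dots> \<le> ((x^2 + y^2) / 2) / N^2"
      proof (rule divide_right_mono)
        have "0 \<le> (\<bar>x\<bar> - \<bar>y\<bar>)^2" by simp
        thus "\<bar>x\<bar> * \<bar>y\<bar> \<le> (x^2 + y^2) / 2" by (simp add: power2_eq_square algebra_simps)
      qed simp
      also have "\<dots> \<le> ((2 * (Mag N \<sigma>)^2 + 8 + (2 * (Mag N \<sigma>)^2 + 8)) / 2) / N^2"
      proof -
        have "x^2 \<le> 2 * (Mag N \<sigma>)^2 + 8" unfolding x_def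
          by (rule sq_shift) (use configs_abs[OF s, of b] in simp)
        moreover have "y^2 \<le> 2 * (Mag N \<sigma>)^2 + 8" unfolding y_def diff_diff_eq
          by (rule sq_shift) (use configs_abs[OF s, of b] configs_abs[OF s, of a] in linarith)
        ultimately show ?thesis by (intro divide_right_mono) auto
      qed
      also have "\<dots> = (2 * (Mag N \<sigma>)^2 + 8) / N^2"
      proof -
        have h: "(u + u) / 2 = u" for u :: real by simp
        show ?thesis by (simp only: h)
      qed
      also have "\<dots> \<le> (2 / N^2) * (Mag N \<sigma>)^2 + 8 / N^2" by (simp add: add_divide_distrib)
      finally show "\<bar>tb \<sigma> * (tab \<sigma> * g \<sigma>)\<bar> \<le> (2 / N^2) * (Mag N \<sigma>)^2 + 8 / N^2" .
    qed
    also have "\<dots> = (2 / N^2) * cw_avg N \<beta> (\<lambda>\<sigma>. (Mag N \<sigma>)^2) + 8 / N^2"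
      by (simp only: avg_add avg_cmult avg_const)
    also have "\<dots> \<le> (2 / N^2) * (2 * N / (1 - \<beta>)) + 8 / N^2"
      using M2_bound[OF N b0 b1] by (intro add_right_mono mult_left_mono) simp_all
    also have "\<dots> \<le> (4 / (1 - \<beta>) + 8) / N"
    proof -
      have e: "(2 / N^2) * (2 * N / (1 - \<beta>)) = 4 / (1 - \<beta>) / N"
        using Nr by (simp add: power2_eq_square field_simps)
      have "8 / (real N)^2 \<le> 8 / N" using Nr N
        by (intro divide_left_mono) (auto simp: power2_eq_square)
      thus ?thesis unfolding e by (simp add: add_divide_distrib)
    qed
    finally show ?thesis .
  qed
  show ?thesis
    using A1 A2 unfolding step1 step2 step3 by (simp add: add_divide_distrib)
qed



lemma block_bound:
  fixes n :: nat and i j :: "nat \<Rightarrow> nat" and B :: "nat set"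
  assumes N: "N > 0" and b0: "0 \<le> \<beta>" and b1: "\<beta> < 1"
    and rng: "\<forall>k<n. i k \<in> {1..N} \<and> j k \<in> {1..N}"
    and inj: "inj_on (\<lambda>p. case p of Inl k \<Rightarrow> i k | Inr k \<Rightarrow> j k) ({..<n} <+> {..<n})"
    and B: "B \<subseteq> {..<n}" "B \<noteq> {}"
  shows "\<bar>cw_avg N \<beta> (\<lambda>\<sigma>. \<Prod>k\<in>B. \<sigma> (i k) * \<sigma> (j k))\<bar> \<le> (4 / (1 - \<beta>) + 9) / N"
proof -
  obtain k0 where k0: "k0 \<in> B" using B by auto
  have finB: "finite B" by (rule finite_subset[OF B(1)]) simp
  define g where "g \<sigma> = (\<Prod>k\<in>B - {k0}. \<sigma> (i k) * \<sigma> (j k))" for \<sigma> :: "nat \<Rightarrow> real"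
  have k0n: "k0 < n" using k0 B by auto
  have injD: "\<And>p q. p \<in> {..<n} <+> {..<n} \<Longrightarrow> q \<in> {..<n} <+> {..<n} \<Longrightarrow>
      (case p of Inl k \<Rightarrow> i k | Inr k \<Rightarrow> j k) = (case q of Inl k \<Rightarrow> i k | Inr k \<Rightarrow> j k) \<Longrightarrow> p = q"
    using inj unfolding inj_on_def by blast
  have mem: "Inl k \<in> {..<n} <+> {..<n}" "Inr k \<in> {..<n} <+> {..<n}" if "k < n" for k
    using that by auto
  have ab: "i k0 \<noteq> j k0"
  proof
    assume "i k0 = j k0"
    hence "Inl k0 = (Inr k0 :: nat + nat)" using injD[OF mem(1)[OF k0n] mem(2)[OF k0n]] by simp
    thus False by simp
  qed
  have ne1: "i k \<noteq> i k0" "i k \<noteq> j k0" "j k \<noteq> i k0" "j k \<noteq> j k0" if "k < n" "k \<noteq> k0" for k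
  proof -
    show "i k \<noteq> i k0"
    proof
      assume "i k = i k0"
      hence "Inl k = (Inl k0 :: nat + nat)" using injD[OF mem(1)[OF that(1)] mem(1)[OF k0n]] by simp
      thus False using that by simp
    qed
    show "i k \<noteq> j k0"
    proof
      assume "i k = j k0"
      hence "Inl k = (Inr k0 :: nat + nat)" using injD[OF mem(1)[OF that(1)] mem(2)[OF k0n]] by simp
      thus False by simp
    qed
    show "j k \<noteq> i k0"
    proof
      assume "j k = i k0"
      hence "Inr k = (Inl k0 :: nat + nat)" using injD[OF mem(2)[OF that(1)] mem(1)[OF k0n]] by simp
      thus False by simp
    qed
    show "j k \<noteq> j k0"
    proof
      assume "j k = j k0"
      hence "Inr k = (Inr k0 :: nat + nat)" using injD[OF mem(2)[OF that(1)] mem(2)[OF k0n]] by simp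
      thus False using that by simp
    qed
  qed
  have other: "i k \<noteq> c \<and> j k \<noteq> c" if "k \<in> B - {k0}" "c = i k0 \<or> c = j k0" for k c
  proof -
    have kn: "k < n" and kk: "k \<noteq> k0" using that B by auto
    show ?thesis using that(2) ne1[OF kn kk] by metis
  qed
  have ginv: "g (flip c \<sigma>) = g \<sigma>" if "c = i k0 \<or> c = j k0" for c \<sigma>
    unfolding g_def using other[OF _ that]
    by (intro prod.cong refl) (simp add: flip_other)
  have g1: "\<bar>g \<sigma>\<bar> \<le> 1" if s: "\<sigma> \<in> configs N" for \<sigma>
    unfolding g_def abs_prod by (simp add: abs_mult configs_abs[OF s])
  have "(\<lambda>\<sigma>. \<Prod>k\<in>B. \<sigma> (i k) * \<sigma> (j k)) = (\<lambda>\<sigma>. \<sigma> (i k0) * \<sigma> (j k0) * g \<sigma>)"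
    unfolding g_def by (rule ext, subst prod.remove[OF finB k0]) (simp add: mult.assoc)
  moreover have "\<bar>cw_avg N \<beta> (\<lambda>\<sigma>. \<sigma> (i k0) * \<sigma> (j k0) * g \<sigma>)\<bar> \<le> (4 / (1 - \<beta>) + 9) / N"
  proof (rule pair_bound[OF N b0 b1 _ _ ab])
    show "i k0 \<in> {1..N}" "j k0 \<in> {1..N}" using rng k0n by auto
    show "g (flip (i k0) \<sigma>) = g \<sigma>" for \<sigma> by (rule ginv) simp
    show "g (flip (j k0) \<sigma>) = g \<sigma>" for \<sigma> by (rule ginv) simp
    show "\<bar>g \<sigma>\<bar> \<le> 1" if "\<sigma> \<in> configs N" for \<sigma> by (rule g1[OF that])
  qed
  ultimately show ?thesis by simp
qed



lemma block_le1:
  "\<bar>cw_avg N \<beta> (\<lambda>\<sigma>. \<Prod>k\<in>B. \<sigma> (i k) * \<sigma> (j k))\<bar> \<le> 1"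
proof -
  have "\<bar>cw_avg N \<beta> (\<lambda>\<sigma>. \<Prod>k\<in>B. \<sigma> (i k) * \<sigma> (j k))\<bar>
     \<le> cw_avg N \<beta> (\<lambda>\<sigma>. \<bar>\<Prod>k\<in>B. \<sigma> (i k) * \<sigma> (j k)\<bar>)" by (rule avg_abs)
  also have "\<dots> \<le> cw_avg N \<beta> (\<lambda>\<sigma>. 1)"
    by (rule avg_mono) (simp add: abs_prod abs_mult configs_abs)
  also have "\<dots> = 1" by (rule avg_const)
  finally show ?thesis .
qed

theorem proposition2p6:
  fixes \<beta> :: real and n :: nat
  assumes "0 \<le> \<beta>" and "\<beta> < 1" and "n \<ge> 2"
  shows "\<exists>C > 0. \<forall>N (i :: nat \<Rightarrow> nat) (j :: nat \<Rightarrow> nat).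
           N \<ge> 2 * n \<longrightarrow>
           (\<forall>k<n. i k \<in> {1..N} \<and> j k \<in> {1..N}) \<longrightarrow>
           inj_on (\<lambda>p. case p of Inl k \<Rightarrow> i k | Inr k \<Rightarrow> j k) ({..<n} <+> {..<n}) \<longrightarrow>
           \<bar>cw_cumulant N \<beta> n (\<lambda>k \<sigma>. \<sigma> (i k) * \<sigma> (j k))\<bar> \<le> C / real N"
proof -
  define K where "K = 4 / (1 - \<beta>) + 9"
  define Parts where "Parts = {\<pi>. partition_on {..<n} \<pi>}"
  define P where "P = (\<Sum>\<pi>\<in>Parts. fact (card \<pi> - 1) :: real)"
  have K0: "K > 0" unfolding K_def using assms by (simp add: add_pos_pos)
  have P0: "P \<ge> 0" unfolding P_def by (intro sum_nonneg) auto
  have finPi: "finite Parts" unfolding Parts_def by (rule finitely_many_partition_on) simp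
  show ?thesis
  proof (intro exI[of _ "P * K + 1"] conjI allI impI)
    show "P * K + 1 > 0" using P0 K0 by (simp add: add_nonneg_pos)
    fix N i j
    assume Nn: "2 * n \<le> N"
      and rng: "\<forall>k<n. i k \<in> {1..N} \<and> j k \<in> {1..N}"
      and inj: "inj_on (\<lambda>p. case p of Inl k \<Rightarrow> i k | Inr k \<Rightarrow> j k) ({..<n} <+> {..<n})"
    have N: "N > 0" using Nn assms(3) by simp
    define av where "av B = cw_avg N \<beta> (\<lambda>\<sigma>. \<Prod>k\<in>B. \<sigma> (i k) * \<sigma> (j k))" for B
    have prodb: "\<bar>\<Prod>B\<in>\<pi>. av B\<bar> \<le> K / N" if pi: "\<pi> \<in> Parts" for \<pi>
    proof -
      have part: "partition_on {..<n} \<pi>" using pi unfolding Parts_def by simp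
      have finpi: "finite \<pi>" by (rule finite_elements[OF _ part]) simp
      have "\<pi> \<noteq> {}"
      proof
        assume "\<pi> = {}"
        hence "{..<n} = {}" using partition_onD1[OF part] by simp
        moreover have "(0::nat) \<in> {..<n}" using assms(3) by simp
        ultimately show False by simp
      qed
      then obtain B0 where B0: "B0 \<in> \<pi>" by auto
      have B0s: "B0 \<subseteq> {..<n}" "B0 \<noteq> {}"
        using partition_onD1[OF part] partition_onD3[OF part] B0 by auto
      have "\<bar>\<Prod>B\<in>\<pi>. av B\<bar> = \<bar>av B0\<bar> * (\<Prod>B\<in>\<pi> - {B0}. \<bar>av B\<bar>)"
        unfolding abs_prod using prod.remove[OF finpi B0] by simp
      also have "\<dots> \<le> (K / N) * 1"
      proof (rule mult_mono)
        show "\<bar>av B0\<bar> \<le> K / N" unfolding av_def K_def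
          by (rule block_bound[OF N assms(1,2) rng inj B0s])
        show "(\<Prod>B\<in>\<pi> - {B0}. \<bar>av B\<bar>) \<le> 1"
          by (rule prod_le_1) (auto simp: av_def block_le1)
      qed (use K0 in \<open>auto intro: prod_nonneg\<close>)
      finally show ?thesis by simp
    qed
    have "\<bar>cw_cumulant N \<beta> n (\<lambda>k \<sigma>. \<sigma> (i k) * \<sigma> (j k))\<bar>
        = \<bar>\<Sum>\<pi>\<in>Parts. (-1) ^ (card \<pi> - 1) * fact (card \<pi> - 1) * (\<Prod>B\<in>\<pi>. av B)\<bar>"
      unfolding cw_cumulant_def Parts_def av_def ..
    also have "\<dots> \<le> (\<Sum>\<pi>\<in>Parts. \<bar>(-1) ^ (card \<pi> - 1) * fact (card \<pi> - 1) * (\<Prod>B\<in>\<pi>. av B)\<bar>)"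
      by (rule sum_abs)
    also have "\<dots> \<le> (\<Sum>\<pi>\<in>Parts. fact (card \<pi> - 1) * (K / N))"
    proof (rule sum_mono)
      fix \<pi> assume pi: "\<pi> \<in> Parts"
      have "\<bar>(-1::real) ^ (card \<pi> - 1) * fact (card \<pi> - 1) * (\<Prod>B\<in>\<pi>. av B)\<bar>
          = fact (card \<pi> - 1) * \<bar>\<Prod>B\<in>\<pi>. av B\<bar>" by (simp add: abs_mult)
      also have "\<dots> \<le> fact (card \<pi> - 1) * (K / N)"
        by (rule mult_left_mono[OF prodb[OF pi]]) simp
      finally show "\<bar>(-1::real) ^ (card \<pi> - 1) * fact (card \<pi> - 1) * (\<Prod>B\<in>\<pi>. av B)\<bar>
          \<le> fact (card \<pi> - 1) * (K / N)" .
    qed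
    also have "\<dots> = P * K / N" unfolding P_def by (simp add: sum_distrib_right sum_divide_distrib)
    also have "\<dots> \<le> (P * K + 1) / N" using N by (simp add: divide_right_mono)
    finally show "\<bar>cw_cumulant N \<beta> n (\<lambda>k \<sigma>. \<sigma> (i k) * \<sigma> (j k))\<bar> \<le> (P * K + 1) / real N" .
  qed
qed

end
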